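(* Let $n\ge 2$ and let $P=[p_1,\ldots,p_n]\neq[n,n-1,\ldots,1]$ be an arithmetically progressed permutation with ratio $k$ such that $p_1\in\{1,k+1,n\}$. Then there exists a string $\mathsf{T}$ of length $n$ over the binary alphabet $\{\mathtt{a},\mathtt{b}\}$ ($\mathtt{a}<\mathtt{b}$) with $\mathsf{SA}_{\mathsf{T}}=P$.
   Context: Lexicographic order with a proper prefix smaller than the longer string; suffix array $\mathsf{SA}_{\mathsf{T}}$: permutation of $[1..n]$ such that $\mathsf{T}[\mathsf{SA}_{\mathsf{T}}[i]..n]$ is the $i$-th smallest suffix. $x\bmod n$ denotes the representative of $x$ modulo $n$ in $[1..n]$. An arithmetically progressed permutation of length $n$ with ratio $k\in[1..n-1]$ is a permutation $P=[p_1,\ldots,p_n]$ of $[1..n]$ with $p_{i+1}=p_i+k\bmod n$. *)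

theory Defs
  imports Main
begin

datatype ab = a | b

instantiation ab :: linorder
begin
fun less_eq_ab :: "ab \<Rightarrow> ab \<Rightarrow> bool" where
  "less_eq_ab a _ = True"
| "less_eq_ab b y = (y = b)"
definition less_ab :: "ab \<Rightarrow> ab \<Rightarrow> bool" where
  "less_ab x y = (x \<le> y \<and> x \<noteq> y)"
instance proof
  fix x y z :: ab
  show "x \<le> x" by (cases x) auto
  show "x \<le> y \<or> y \<le> x" by (cases x; cases y) auto
  show "x < y \<longleftrightarrow> x \<le> y \<and> \<not> y \<le> x" by (cases x; cases y) (auto simp: less_ab_def)
  show "x \<le> y \<Longrightarrow> y \<le> z \<Longrightarrow> x \<le> z" by (cases x; cases y; cases z) auto
  show "x \<le> y \<Longrightarrow> y \<le> x \<Longrightarrow> x = y" by (cases x; cases y) auto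
qed
end

text \<open>Lexicographic order on strings; a proper prefix is smaller (library lexord).\<close>
definition str_less :: "'c::linorder list \<Rightarrow> 'c list \<Rightarrow> bool" where
  "str_less xs ys \<longleftrightarrow> (xs, ys) \<in> lexord {(x, y). x < y}"

text \<open>Suffix T[i..n], 1-indexed.\<close>
definition suffix_at :: "'c list \<Rightarrow> nat \<Rightarrow> 'c list" where
  "suffix_at T i = drop (i - 1) T"

definition is_suffix_array :: "'c::linorder list \<Rightarrow> nat list \<Rightarrow> bool" where
  "is_suffix_array T P \<longleftrightarrow>
     length P = length T \<and> set P = {1..length T} \<and>
     (\<forall>i. i + 1 < length P \<longrightarrow> str_less (suffix_at T (P ! i)) (suffix_at T (P ! (i + 1))))"

definition modr :: "nat \<Rightarrow> nat \<Rightarrow> nat" where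
  "modr x n = (if x mod n = 0 then n else x mod n)"

definition arith_prog_perm :: "nat \<Rightarrow> nat \<Rightarrow> nat list \<Rightarrow> bool" where
  "arith_prog_perm n k P \<longleftrightarrow>
     1 \<le> k \<and> k \<le> n - 1 \<and> length P = n \<and> set P = {1..n} \<and>
     (\<forall>i. i + 1 < n \<longrightarrow> P ! (i + 1) = modr (P ! i + k) n)"

end

theory Submission
  imports Defs
begin

context
  fixes T :: "'c::linorder list" and P :: "nat list" and n :: nat and R :: "nat \<Rightarrow> nat"
  assumes lenT: "length T = n" and lenP: "length P = n"
    and setP: "set P = {1..n}"
    and Rinv: "\<And>j. j < n \<Longrightarrow> R (P!j) = j"
    and mono: "\<And>j. j+1<n \<Longrightarrow> T!(P!j-1) \<le> T!(P!(j+1)-1)"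
    and cond: "\<And>j. j+1<n \<Longrightarrow> T!(P!j-1) = T!(P!(j+1)-1) \<Longrightarrow>
                  P!j = n \<or> (P!(j+1) \<noteq> n \<and> R(P!j+1) < R(P!(j+1)+1))"
begin

lemma Pin: "j < n \<Longrightarrow> P!j \<in> {1..n}"
  using setP lenP nth_mem by blast

lemma chain_le: "i \<le> i' \<Longrightarrow> i' < n \<Longrightarrow> T!(P!i-1) \<le> T!(P!i'-1)"
proof (induction i' rule: dec_induct)
  case base then show ?case by simp
next
  case (step m)
  have 1: "T!(P!m-1) \<le> T!(P!(Suc m)-1)" using mono[of m] step(4) by simp
  have 2: "T!(P!i-1) \<le> T!(P!m-1)" using step(3,4) by simp
  show ?case using order_trans[OF 2 1] .
qed

lemma chain_eq: "i \<le> j \<Longrightarrow> j \<le> i' \<Longrightarrow> i' < n \<Longrightarrow> T!(P!i-1) = T!(P!i'-1)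
   \<Longrightarrow> T!(P!j-1) = T!(P!i-1)"
proof -
  assume h: "i \<le> j" "j \<le> i'" "i' < n" "T!(P!i-1) = T!(P!i'-1)"
  have 1: "T!(P!i-1) \<le> T!(P!j-1)" using chain_le[of i j] h by simp
  have 2: "T!(P!j-1) \<le> T!(P!i'-1)" using chain_le[of j i'] h by simp
  show ?thesis using 1 2 h(4) by (simp add: antisym)
qed

lemma chain_R: assumes "i < i'" "i' < n" "T!(P!i-1) = T!(P!i'-1)" "P!i \<noteq> n"
  shows "i < j \<Longrightarrow> j \<le> i' \<Longrightarrow> P!j \<noteq> n \<and> R(P!i+1) < R(P!j+1)"
proof (induction j rule: less_induct)
  case (less j)
  obtain j00 where j00: "j = Suc j00" using less.prems by (cases j) auto
  then have j0: "j = Suc j00" "i \<le> j00" using less.prems by auto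
  define j0 where "j0 = j00"
  note j0 = j0[folded j0_def]
  have e1: "T!(P!j0-1) = T!(P!i-1)" using chain_eq[of i j0 i'] assms j0 less.prems by simp
  have e2: "T!(P!j-1) = T!(P!i-1)" using chain_eq[of i j i'] assms j0 less.prems by simp
  have c: "P!j0 = n \<or> (P!j \<noteq> n \<and> R(P!j0+1) < R(P!j+1))"
    using cond[of j0] e1 e2 j0 less.prems assms by simp
  show ?case
  proof (cases "j0 = i")
    case True then show ?thesis using c assms j0 by simp
  next
    case False
    then have "P!j0 \<noteq> n \<and> R(P!i+1) < R(P!j0+1)" using less.IH[of j0] less.prems j0 by simp
    then show ?thesis using c by auto
  qed
qed

lemma sorted_main: "i < i' \<Longrightarrow> i' < n \<Longrightarrow>
   str_less (drop (P!i - 1) T) (drop (P!i' - 1) T)"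
proof (induction "n - P!i" arbitrary: i i' rule: less_induct)
  case less
  have xi: "P!i \<in> {1..n}" "P!i' \<in> {1..n}" using Pin less by auto
  have d1: "drop (P!i - 1) T = T!(P!i-1) # drop (P!i) T"
  proof -
    have "P!i - 1 < length T" using xi lenT by auto
    then have "drop (P!i - 1) T = T!(P!i-1) # drop (Suc (P!i - 1)) T" by (rule Cons_nth_drop_Suc[symmetric])
    moreover have "Suc (P!i - 1) = P!i" using xi by auto
    ultimately show ?thesis by simp
  qed
  have d2: "drop (P!i' - 1) T = T!(P!i'-1) # drop (P!i') T"
  proof -
    have "P!i' - 1 < length T" using xi lenT by auto
    then have "drop (P!i' - 1) T = T!(P!i'-1) # drop (Suc (P!i' - 1)) T" by (rule Cons_nth_drop_Suc[symmetric])
    moreover have "Suc (P!i' - 1) = P!i'" using xi by auto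
    ultimately show ?thesis by simp
  qed
  have le: "T!(P!i-1) \<le> T!(P!i'-1)" using chain_le less by simp
  show ?case
  proof (cases "T!(P!i-1) = T!(P!i'-1)")
    case False
    then show ?thesis using le unfolding str_less_def d1 d2 by simp
  next
    case eq: True
    have neq: "P!i \<noteq> P!i'" using Rinv[of i] Rinv[of i'] less by auto
    show ?thesis
    proof (cases "P!i = n")
      case True
      then have "P!i' < n" using xi neq by auto
      then obtain c cs where "drop (P!i') T = c # cs" using lenT
        by (cases "drop (P!i') T") auto
      then show ?thesis using True lenT eq unfolding str_less_def d1 d2
        by simp
    next
      case False
      have cr: "P!i' \<noteq> n \<and> R(P!i+1) < R(P!i'+1)"
        using chain_R[of i i' i'] less eq False by simp
      have "P!i + 1 \<in> set P" "P!i' + 1 \<in> set P" using xi False cr setP by auto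
      then obtain u u' where u: "u < n" "P!u = P!i+1" "u' < n" "P!u' = P!i'+1"
        using lenP by (metis in_set_conv_nth)
      have uu: "u < u'" using cr u Rinv[of u] Rinv[of u'] by simp
      have "n - P!u < n - P!i" using u xi False by auto
      then have "str_less (drop (P!u - 1) T) (drop (P!u' - 1) T)"
        using less uu u by blast
      then show ?thesis using u eq unfolding str_less_def d1 d2 by simp
    qed
  qed
qed

lemma sa_ok: "is_suffix_array T P"
  unfolding is_suffix_array_def suffix_at_def using lenT lenP setP sorted_main by simp

end

lemma modr_eq: "0 < n \<Longrightarrow> 0 < z \<Longrightarrow> z \<le> 2*n \<Longrightarrow> modr z n = (if z \<le> n then z else z - n)"
proof -
  assume h: "0 < n" "0 < z" "z \<le> 2*n"
  consider "z < n" | "z = n" | "n < z" "z < 2*n" | "z = 2*n" using h by linarith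
  then show ?thesis
  proof cases
    case 3
    then have "z mod n = z - n" by (simp add: le_mod_geq)
    then show ?thesis using 3 h unfolding modr_def by auto
  qed (use h in \<open>auto simp: modr_def\<close>)
qed

theorem theorem9:
  fixes n k :: nat and P :: "nat list"
  assumes "n \<ge> 2"
    and "arith_prog_perm n k P"
    and "P \<noteq> rev [1..<n+1]"
    and "P ! 0 \<in> {1, k + 1, n}"
  shows "\<exists>T :: ab list. length T = n \<and> is_suffix_array T P"
proof -
  have k1: "1 \<le> k" and kn: "k \<le> n - 1" and lenP: "length P = n" and setP: "set P = {1..n}"
    and stp: "\<And>i. i + 1 < n \<Longrightarrow> P ! (i + 1) = modr (P ! i + k) n"
    using assms(2) unfolding arith_prog_perm_def by auto
  have n0: "0 < n" using assms(1) by simp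
  have dist: "distinct P" using setP lenP by (metis card_atLeastAtMost card_distinct diff_Suc_1)
  have Pin: "\<And>j. j < n \<Longrightarrow> P!j \<in> {1..n}" using setP lenP nth_mem by blast
  define R where "R x = (THE j. j < n \<and> P!j = x)" for x
  have Rinv: "\<And>j. j < n \<Longrightarrow> R (P!j) = j"
    unfolding R_def using dist lenP by (auto intro!: the_equality simp: nth_eq_iff_index_eq)
  have Rs: "\<And>x. x \<in> {1..n} \<Longrightarrow> R x < n \<and> P!(R x) = x"
  proof -
    fix x assume "x \<in> {1..n}"
    then obtain j where "j < n" "P!j = x" using setP lenP by (metis in_set_conv_nth)
    then show "R x < n \<and> P!(R x) = x" using Rinv by auto
  qed
  have stp2: "\<And>i. i + 1 < n \<Longrightarrow> P ! (i + 1) = (if P!i + k \<le> n then P!i + k else P!i + k - n)"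
  proof -
    fix i assume i: "i + 1 < n"
    then have "P!i \<in> {1..n}" using Pin by simp
    then have "P!i + k \<le> 2*n" "0 < P!i + k" using kn by auto
    then show "P ! (i + 1) = (if P!i + k \<le> n then P!i + k else P!i + k - n)"
      using stp[OF i] modr_eq[OF n0] by simp
  qed
  have lastv: "(if P!(n-1) + k \<le> n then P!(n-1) + k else P!(n-1) + k - n) = P!0"
  proof -
    let ?v = "(if P!(n-1) + k \<le> n then P!(n-1) + k else P!(n-1) + k - n)"
    have pl: "P!(n-1) \<in> {1..n}" using Pin n0 by simp
    have "?v \<in> {1..n}" using pl kn by auto
    then obtain i where i: "i < n" "P!i = ?v" using setP lenP by (metis in_set_conv_nth)
    show ?thesis
    proof (cases i)
      case (Suc i0)
      have "P!i = (if P!i0 + k \<le> n then P!i0 + k else P!i0 + k - n)" using stp2[of i0] Suc i by simp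
      moreover have "P!i0 \<in> {1..n}" using Pin Suc i by simp
      ultimately have "P!i0 = P!(n-1)" using i pl kn by (auto split: if_splits)
      then have "i0 = n-1" using dist lenP Suc i by (simp add: nth_eq_iff_index_eq)
      then show ?thesis using Suc i by simp
    qed (use i in simp)
  qed
  have notrev: "\<not> (P!0 = n \<and> k = n - 1)"
  proof
    assume h: "P!0 = n \<and> k = n - 1"
    have "\<forall>j<n. P!j = n - j"
    proof (intro allI impI)
      fix j assume "j < n" then show "P!j = n - j"
      proof (induction j)
        case 0 then show ?case using h by simp
      next
        case (Suc j) then show ?case using stp2[of j] h by simp
      qed
    qed
    moreover have "\<And>j. j < n \<Longrightarrow> rev [1..<n+1] ! j = n - j"
      by (simp add: rev_nth nth_upt del: upt_Suc)
    ultimately have "P = rev [1..<n+1]" using lenP by (intro nth_equalityI) auto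
    then show False using assms(3) by simp
  qed
  have key: "\<exists>m. \<forall>j. j+1 < n \<longrightarrow> j+1 \<noteq> m \<longrightarrow> P!j \<noteq> n \<longrightarrow> P!(j+1) \<noteq> n \<and> P!j + 1 \<noteq> P!(n-1)"
  proof -
    have pl: "P!(n-1) \<in> {1..n}" using Pin n0 by simp
    consider "P!0 = 1" | "P!0 = k + 1" "k + 1 < n" | "P!0 = n" "k + 1 < n"
    proof -
      have "P!0 = 1 \<or> P!0 = k+1 \<or> P!0 = n" using assms(4) by simp
      moreover have "k + 1 \<le> n" using kn n0 by linarith
      ultimately show ?thesis using that notrev by fastforce
    qed
    then show ?thesis
    proof cases
      case 1
      have ln: "P!(n-1) = n - k + 1" using lastv 1 pl kn k1 by (auto split: if_splits)
      show ?thesis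
      proof (intro exI[of _ "R n"] allI impI conjI)
        fix j assume j: "j+1 < n" "j + 1 \<noteq> R n" "P!j \<noteq> n"
        show nn: "P!(j+1) \<noteq> n"
        proof
          assume "P!(j+1) = n" then have "R n = j+1" using Rinv[of "j+1"] j by simp
          then show False using j by simp
        qed
        show "P!j + 1 \<noteq> P!(n-1)" using nn stp2[of j] j ln kn by auto
      qed
    next
      case 2
      have ln: "P!(n-1) = 1" using lastv 2 pl kn k1 by (auto split: if_splits)
      show ?thesis
      proof (intro exI[of _ "R n"] allI impI conjI)
        fix j assume j: "j+1 < n" "j + 1 \<noteq> R n" "P!j \<noteq> n"
        show nn: "P!(j+1) \<noteq> n"
        proof
          assume "P!(j+1) = n" then have "R n = j+1" using Rinv[of "j+1"] j by simp
          then show False using j by simp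
        qed
        show "P!j + 1 \<noteq> P!(n-1)" using ln Pin[of j] j by simp
      qed
    next
      case 3
      have "P!(n-1) + k = n"
      proof (cases "P!(n-1)+k \<le> n")
        case True
        have "P!(n-1)+k = P!0" using lastv unfolding if_P[OF True] .
        then show ?thesis using 3 by simp
      next
        case False
        have "P!(n-1)+k-n = P!0" using lastv unfolding if_not_P[OF False] .
        then have "P!(n-1)+k-n = n" using 3 by simp
        moreover have "P!(n-1) \<le> n" using pl by simp
        ultimately show ?thesis using kn n0 by arith
      qed
      then have ln: "P!(n-1) = n - k" by simp
      show ?thesis
      proof (intro exI[of _ "R (n-1)"] allI impI conjI)
        fix j assume j: "j+1 < n" "j + 1 \<noteq> R (n-1)" "P!j \<noteq> n"
        show nn: "P!(j+1) \<noteq> n"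
        proof
          assume "P!(j+1) = n" then have "j+1 = 0" using Rinv[of "j+1"] Rinv[of 0] j n0 3 by simp
          then show False by simp
        qed
        show "P!j + 1 \<noteq> P!(n-1)"
        proof
          assume "P!j + 1 = P!(n-1)"
          then have "P!(j+1) = n - 1" using stp2[of j] j ln 3 by auto
          then have "R (n-1) = j+1" using Rinv[of "j+1"] j by simp
          then show False using j by simp
        qed
      qed
    qed
  qed
  then obtain m where m: "\<And>j. j+1 < n \<Longrightarrow> j+1 \<noteq> m \<Longrightarrow> P!j \<noteq> n \<Longrightarrow> P!(j+1) \<noteq> n \<and> P!j + 1 \<noteq> P!(n-1)"
    by blast
  have adv: "\<And>j. j+1 < n \<Longrightarrow> j+1 \<noteq> m \<Longrightarrow> P!j \<noteq> n \<Longrightarrow> R(P!j+1) < R(P!(j+1)+1)"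
  proof -
    fix j assume j: "j+1 < n" "j+1 \<noteq> m" "P!j \<noteq> n"
    have mm: "P!(j+1) \<noteq> n" "P!j + 1 \<noteq> P!(n-1)" using m j by auto
    have pj: "P!j \<in> {1..n}" using Pin j by simp
    let ?i = "R(P!j+1)"
    have i: "?i < n" "P!?i = P!j+1" using Rs[of "P!j+1"] pj j by auto
    have "?i \<noteq> n - 1" using i mm by auto
    then have "P!(?i+1) = P!(j+1)+1" using stp2[of ?i] stp2[of j] i j mm pj by auto
    then have "R(P!(j+1)+1) = ?i + 1" using Rinv[of "?i+1"] \<open>?i \<noteq> n - 1\<close> i by simp
    then show "R(P!j+1) < R(P!(j+1)+1)" by simp
  qed
  define T where "T = map (\<lambda>x. if R (Suc x) < m then a else b) [0..<n]"
  have lenT: "length T = n" unfolding T_def by simp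
  have TP: "\<And>j. j < n \<Longrightarrow> T!(P!j-1) = (if j < m then a else b)"
  proof -
    fix j assume j: "j < n"
    then have "P!j \<in> {1..n}" using Pin by simp
    then show "T!(P!j-1) = (if j < m then a else b)" unfolding T_def using Rinv j by auto
  qed
  have mono: "\<And>j. j+1<n \<Longrightarrow> T!(P!j-1) \<le> T!(P!(j+1)-1)"
  proof -
    fix j assume "j+1<n"
    then show "T!(P!j-1) \<le> T!(P!(j+1)-1)" using TP[of j] TP[of "j+1"] by auto
  qed
  have cond: "\<And>j. j+1<n \<Longrightarrow> T!(P!j-1) = T!(P!(j+1)-1) \<Longrightarrow>
                  P!j = n \<or> (P!(j+1) \<noteq> n \<and> R(P!j+1) < R(P!(j+1)+1))"
  proof -
    fix j assume j: "j+1<n" "T!(P!j-1) = T!(P!(j+1)-1)"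
    then have "j+1 \<noteq> m" using TP[of j] TP[of "j+1"] by (auto split: if_splits)
    then show "P!j = n \<or> (P!(j+1) \<noteq> n \<and> R(P!j+1) < R(P!(j+1)+1))"
      using m adv j by blast
  qed
  have "is_suffix_array T P"
    by (rule sa_ok[OF lenT lenP setP Rinv mono cond])
  then show ?thesis using lenT by blast
qed

end
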